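(* Let $g$ be a consistent piece-wise quadratic function with pieces $p_1,\dots,p_N$ and breakpoints $-\infty=\tau_0<\tau_1<\dots<\tau_N=+\infty$. For $\beta\in\mathbb{R}$ and $k\in\{1,\dots,N\}$ let $\ell_{k;\beta}(\alpha)=\beta\alpha-p_k^*(\beta)$, where $p_k^*(\beta)=\sup_\alpha\{\beta\alpha-p_k(\alpha)\}$. Fix $\beta\in\mathbb{R}$, let $\alpha^\star(\beta)\in\arg\max_\alpha\{\beta\alpha-g(\alpha)\}$, and let $k^*$ be such that $\tau_{k^*-1}\le\alpha^\star(\beta)\le\tau_{k^*}$. Then (1) $\alpha^\star(\beta)\notin\{\tau_{k^*-1},\tau_{k^*}\}$; and (2) $\ell_{k^*;\beta}(\alpha^\star(\beta))=g(\alpha^\star(\beta))$ and $\ell_{k^*;\beta}(\alpha)\le g(\alpha)$ for every $\alpha\in\mathbb{R}$.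
   Context: A continuous $g$ is piece-wise quadratic with $N$ pieces if $g=p_k$ on $[\tau_{k-1},\tau_k]$ for quadratic functions $p_k$ with $p_k\ne p_{k+1}$ as functions; it is consistent if every $p_k$ is strongly convex and $g=\min_kp_k$ on $\mathbb{R}$. *)

theory Defs
  imports Complex_Main "HOL-Library.Extended_Real"
begin

definition quadratic :: "(real \<Rightarrow> real) \<Rightarrow> bool" where
  "quadratic p \<longleftrightarrow> (\<exists>a b c. \<forall>x. p x = a * x^2 + b * x + c)"

definition strongly_convex_quadratic :: "(real \<Rightarrow> real) \<Rightarrow> bool" where
  "strongly_convex_quadratic p \<longleftrightarrow> (\<exists>a b c. a > 0 \<and> (\<forall>x. p x = a * x^2 + b * x + c))"

definition piecewise_quadratic ::
  "(real \<Rightarrow> real) \<Rightarrow> nat \<Rightarrow> (nat \<Rightarrow> real \<Rightarrow> real) \<Rightarrow> (nat \<Rightarrow> ereal) \<Rightarrow> bool" where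
  "piecewise_quadratic g N p \<tau> \<longleftrightarrow>
     N \<ge> 1 \<and> continuous_on UNIV g \<and>
     \<tau> 0 = -\<infinity> \<and> \<tau> N = \<infinity> \<and>
     (\<forall>k < N. \<tau> k < \<tau> (Suc k)) \<and>
     (\<forall>k\<in>{1..N}. quadratic (p k)) \<and>
     (\<forall>k\<in>{1..<N}. p k \<noteq> p (Suc k)) \<and>
     (\<forall>k\<in>{1..N}. \<forall>x. \<tau> (k - 1) \<le> ereal x \<and> ereal x \<le> \<tau> k \<longrightarrow> g x = p k x)"

definition consistent_pwq ::
  "(real \<Rightarrow> real) \<Rightarrow> nat \<Rightarrow> (nat \<Rightarrow> real \<Rightarrow> real) \<Rightarrow> (nat \<Rightarrow> ereal) \<Rightarrow> bool" where
  "consistent_pwq g N p \<tau> \<longleftrightarrow>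
     piecewise_quadratic g N p \<tau> \<and>
     (\<forall>k\<in>{1..N}. strongly_convex_quadratic (p k)) \<and>
     (\<forall>x. g x = (MIN k\<in>{1..N}. p k x))"

definition conj :: "(real \<Rightarrow> real) \<Rightarrow> real \<Rightarrow> real" where
  "conj p \<beta> = (SUP \<alpha>. \<beta> * \<alpha> - p \<alpha>)"

definition ell :: "(nat \<Rightarrow> real \<Rightarrow> real) \<Rightarrow> nat \<Rightarrow> real \<Rightarrow> real \<Rightarrow> real" where
  "ell p k \<beta> \<alpha> = \<beta> * \<alpha> - conj (p k) \<beta>"

end

theory Submission
  imports Defs
begin

lemma quad_max:
  fixes p :: "real \<Rightarrow> real"
  assumes a: "a > 0" and pe: "\<forall>x. p x = a*x^2+b*x+c"
    and mx: "\<forall>x. \<beta>*x - p x \<le> \<beta>*t - p t"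
  shows "p x = p t + \<beta>*(x-t) + a*(x-t)^2"
proof -
  define D where "D = \<beta> - b - 2*a*t"
  have "\<beta>*(t + D/(2*a)) - p (t + D/(2*a)) \<le> \<beta>*t - p t" using mx by blast
  hence "\<beta>*(t + D/(2*a)) - (a*(t + D/(2*a))^2+b*(t + D/(2*a))+c) \<le> \<beta>*t - (a*t^2+b*t+c)"
    using pe by simp
  moreover have "(\<beta>*(t + D/(2*a)) - (a*(t + D/(2*a))^2+b*(t + D/(2*a))+c)) - (\<beta>*t - (a*t^2+b*t+c))
     = D^2/(4*a)" using a unfolding D_def by (simp add: field_simps power2_eq_square)
  ultimately have "D^2/(4*a) \<le> 0" by linarith
  hence "D^2 \<le> 0" using a by (simp add: divide_le_0_iff)
  hence D0: "D = 0" by simp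
  show ?thesis using pe D0 unfolding D_def by (simp add: algebra_simps power2_eq_square)
qed

lemma g_le:
  assumes "consistent_pwq g N p \<tau>" "k \<in> {1..N}"
  shows "g x \<le> p k x"
proof -
  have "g x = Min ((\<lambda>k. p k x) ` {1..N})" using assms(1) unfolding consistent_pwq_def by auto
  also have "\<dots> \<le> p k x" using assms(2) by (intro Min_le) auto
  finally show ?thesis .
qed

lemma no_break:
  assumes c: "consistent_pwq g N p \<tau>"
    and mx: "\<forall>\<alpha>. \<beta> * \<alpha> - g \<alpha> \<le> \<beta> * t - g t"
    and k: "1 \<le> k" "k < N" and tk: "\<tau> k = ereal t"
  shows False
proof -
  have pw: "piecewise_quadratic g N p \<tau>" using c unfolding consistent_pwq_def by auto
  have k1: "k \<in> {1..N}" "Suc k \<in> {1..N}" using k by auto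
  have gp: "\<And>j x. j \<in> {1..N} \<Longrightarrow> \<tau> (j - 1) \<le> ereal x \<Longrightarrow> ereal x \<le> \<tau> j \<Longrightarrow> g x = p j x"
    using pw unfolding piecewise_quadratic_def by blast
  have mono: "\<And>j. j < N \<Longrightarrow> \<tau> j < \<tau> (Suc j)" using pw unfolding piecewise_quadratic_def by blast
  have ne: "p k \<noteq> p (Suc k)" using pw k unfolding piecewise_quadratic_def by auto
  obtain a1 b1 c1 where A1: "a1 > 0" "\<forall>x. p k x = a1*x^2+b1*x+c1"
    using c k1 unfolding consistent_pwq_def strongly_convex_quadratic_def by blast
  obtain a2 b2 c2 where A2: "a2 > 0" "\<forall>x. p (Suc k) x = a2*x^2+b2*x+c2"
    using c k1 unfolding consistent_pwq_def strongly_convex_quadratic_def by blast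
  have lt1: "\<tau> (k - 1) < \<tau> k" using mono[of "k-1"] k by simp
  have lt2: "\<tau> k < \<tau> (Suc k)" using mono k by simp
  have gt1: "g t = p k t" using gp[OF k1(1)] lt1 tk by simp
  have gt2: "g t = p (Suc k) t" using gp[OF k1(2)] lt2 tk by simp
  have m1: "\<forall>x. \<beta>*x - p k x \<le> \<beta>*t - p k t"
    using mx g_le[OF c k1(1)] gt1 by (smt (verit))
  have m2: "\<forall>x. \<beta>*x - p (Suc k) x \<le> \<beta>*t - p (Suc k) t"
    using mx g_le[OF c k1(2)] gt2 by (smt (verit))
  have q1: "\<And>x. p k x = p k t + \<beta>*(x-t) + a1*(x-t)^2" using quad_max[OF A1 m1] .
  have q2: "\<And>x. p (Suc k) x = p (Suc k) t + \<beta>*(x-t) + a2*(x-t)^2" using quad_max[OF A2 m2] .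
  obtain y where y: "\<tau> (k-1) < ereal y" "ereal y < \<tau> k" using lt1 ereal_dense2 by blast
  obtain z where z: "\<tau> k < ereal z" "ereal z < \<tau> (Suc k)" using lt2 ereal_dense2 by blast
  have yt: "y < t" using y tk by simp
  have zt: "t < z" using z tk by simp
  have "g y = p k y" using gp[OF k1(1)] y by auto
  hence "p k y \<le> p (Suc k) y" using g_le[OF c k1(2), where x=y] by simp
  hence "a1*(y-t)^2 \<le> a2*(y-t)^2" using q1[of y] q2[of y] gt1 gt2 by simp
  hence le1: "a1 \<le> a2" using yt by (simp add: mult_le_cancel_right)
  have "g z = p (Suc k) z" using gp[OF k1(2)] z tk by auto
  hence "p (Suc k) z \<le> p k z" using g_le[OF c k1(1), where x=z] by simp
  hence "a2*(z-t)^2 \<le> a1*(z-t)^2" using q1[of z] q2[of z] gt1 gt2 by simp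
  hence le2: "a2 \<le> a1" using zt by (simp add: mult_le_cancel_right)
  have "p k = p (Suc k)"
  proof
    fix x show "p k x = p (Suc k) x" using q1[of x] q2[of x] gt1 gt2 le1 le2 by simp
  qed
  thus False using ne by simp
qed

theorem lemma6:
  fixes g :: "real \<Rightarrow> real" and N :: nat and p :: "nat \<Rightarrow> real \<Rightarrow> real"
    and \<tau> :: "nat \<Rightarrow> ereal" and \<beta> \<alpha>s :: real and ks :: nat
  assumes "consistent_pwq g N p \<tau>"
    and "\<forall>\<alpha>. \<beta> * \<alpha> - g \<alpha> \<le> \<beta> * \<alpha>s - g \<alpha>s"
    and "ks \<in> {1..N}" and "\<tau> (ks - 1) \<le> ereal \<alpha>s" and "ereal \<alpha>s \<le> \<tau> ks"
  shows "ereal \<alpha>s \<noteq> \<tau> (ks - 1) \<and> ereal \<alpha>s \<noteq> \<tau> ks \<and>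
         ell p ks \<beta> \<alpha>s = g \<alpha>s \<and> (\<forall>\<alpha>. ell p ks \<beta> \<alpha> \<le> g \<alpha>)"
proof -
  have pw: "piecewise_quadratic g N p \<tau>" using assms(1) unfolding consistent_pwq_def by auto
  have t0: "\<tau> 0 = -\<infinity>" and tN: "\<tau> N = \<infinity>" using pw unfolding piecewise_quadratic_def by auto
  have n1: "ereal \<alpha>s \<noteq> \<tau> (ks - 1)"
  proof
    assume h: "ereal \<alpha>s = \<tau> (ks - 1)"
    show False
    proof (cases "ks = 1")
      case True thus False using h t0 by simp
    next
      case False
      have "1 \<le> ks - 1" "ks - 1 < N" using False assms(3) by auto
      thus False using no_break[OF assms(1) assms(2), of "ks - 1"] h by auto
    qed
  qed
  have n2: "ereal \<alpha>s \<noteq> \<tau> ks"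
  proof
    assume h: "ereal \<alpha>s = \<tau> ks"
    show False
    proof (cases "ks = N")
      case True thus False using h tN by simp
    next
      case False
      have "1 \<le> ks" "ks < N" using False assms(3) by auto
      thus False using no_break[OF assms(1) assms(2), of ks] h by auto
    qed
  qed
  have gs: "g \<alpha>s = p ks \<alpha>s" using pw assms(3-5) unfolding piecewise_quadratic_def by blast
  have mxk: "\<And>x. \<beta>*x - p ks x \<le> \<beta>*\<alpha>s - p ks \<alpha>s"
    using assms(2) g_le[OF assms(1) assms(3)] gs by (smt (verit))
  have cj: "conj (p ks) \<beta> = \<beta>*\<alpha>s - p ks \<alpha>s"
    unfolding conj_def by (rule cSup_eq_maximum) (use mxk in auto)
  show ?thesis
  proof (intro conjI n1 n2 allI)
    show "ell p ks \<beta> \<alpha>s = g \<alpha>s" using cj gs unfolding ell_def by simp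
    fix x show "ell p ks \<beta> x \<le> g x" using cj gs assms(2) unfolding ell_def
      by (smt (verit))
  qed
qed

end
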